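(* Let $q$ be a power of an odd prime with $q\equiv 3\pmod 4$ and let $k\equiv 0\pmod 4$ be a positive integer. Let $Q(x)=-x_1^2+\sum_{i=2}^k x_i^2$, $C_k=\{x\in\mathbb{F}_q^k: Q(x)=0\}$, and let $G_{Q,k}$ be the Cayley graph on $\mathbb{F}_q^k$ in which $x,y$ are adjacent iff $x-y\in C_k$. For every set $W\subset\mathbb{F}_q^k$, \[ e(W,W)\le\frac{|W|^2}{q}+q^{\frac{k-2}{2}}|W|, \] where $e(W,W)$ is the number of edges of $G_{Q,k}$ in $W$.
   Context: Here $e(W,W)$ counts (as in the expander mixing lemma) the ordered pairs $(x,y)\in W\times W$ with $x-y\in C_k$. *)

theory Defs
  imports Complex_Main
begin

text \<open>Vectors of F_q^k, represented as functions on nat that vanish at indices >= k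
  (coordinates are indexed 0..k-1; coordinate 0 plays the role of x_1).\<close>
definition fvec :: "nat \<Rightarrow> (nat \<Rightarrow> 'a::zero) set" where
  "fvec k = {x. \<forall>i\<ge>k. x i = 0}"

definition Qform :: "nat \<Rightarrow> (nat \<Rightarrow> 'a::comm_ring_1) \<Rightarrow> 'a" where
  "Qform k x = (\<Sum>i\<in>{1..<k}. (x i)^2) - (x 0)^2"

definition cone :: "nat \<Rightarrow> (nat \<Rightarrow> 'a::comm_ring_1) set" where
  "cone k = {x \<in> fvec k. Qform k x = 0}"

definition edges_in :: "nat \<Rightarrow> (nat \<Rightarrow> 'a::comm_ring_1) set \<Rightarrow> nat" where
  "edges_in k W = card {(x, y). x \<in> W \<and> y \<in> W \<and> (\<lambda>i. x i - y i) \<in> cone k}"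

end

theory Submission
  imports Defs
begin

lemma even_card_invol:
  assumes "finite S" "\<And>x. x \<in> S \<Longrightarrow> f x \<in> S" "\<And>x. x \<in> S \<Longrightarrow> f (f x) = x"
    "\<And>x. x \<in> S \<Longrightarrow> f x \<noteq> x"
  shows "even (card S)"
  using assms
proof (induction "card S" arbitrary: S rule: less_induct)
  case less
  show ?case
  proof (cases "S = {}")
    case True then show ?thesis by simp
  next
    case False
    then obtain x where x: "x \<in> S" by blast
    let ?S = "S - {x, f x}"
    have c: "card S = card ?S + 2"
    proof -
      have "{x, f x} \<subseteq> S" using x less.prems by auto
      moreover have "card {x, f x} = 2" using less.prems(4)[OF x] by simp
      ultimately show ?thesis using less.prems(1) card_mono[OF less.prems(1)]
        by (metis card_Diff_subset finite_subset le_add_diff_inverse2)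
    qed
    have "even (card ?S)"
    proof (rule less.hyps)
      show "card ?S < card S" using c by simp
      show "finite ?S" using less.prems by simp
      fix y assume y: "y \<in> ?S"
      then show "f y \<in> ?S" using less.prems x by (auto, metis)
      show "f (f y) = y" "f y \<noteq> y" using y less.prems by auto
    qed
    then show ?thesis using c by simp
  qed
qed

lemma two_ne_zero_field:
  assumes "odd (card (UNIV :: 'a::{finite,field} set))"
  shows "(2::'a) \<noteq> 0"
proof
  assume h: "(2::'a) = 0"
  have "even (card (UNIV :: 'a set))"
  proof (rule even_card_invol[where f = "\<lambda>x. x + 1"])
    fix x :: 'a
    show "x + 1 + 1 = x" using h by (metis add.assoc add.right_neutral one_add_one)
    show "x + 1 \<noteq> x" by simp
  qed auto
  with assms show False by simp
qed

lemma fermat_field: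
  fixes x :: "'a::{finite,field}"
  assumes "x \<noteq> 0"
  shows "x ^ (card (UNIV :: 'a set) - 1) = 1"
proof -
  have "(\<Prod>y\<in>UNIV-{0}. x * y) = x ^ (card (UNIV :: 'a set) - 1) * \<Prod>(UNIV-{0})"
    by (simp add: prod.distrib mult_ac)
  moreover have "(\<Prod>y\<in>UNIV-{0}. x * y) = (\<Prod>y\<in>UNIV-{0}. y)"
    by (rule prod.reindex_bij_witness[of _ "\<lambda>y. y / x" "\<lambda>y. x * y"]) (use assms in auto)
  moreover have "\<Prod>(UNIV-{0::'a}) \<noteq> 0" by simp
  ultimately show ?thesis by (metis mult_cancel_right2)
qed

lemma minus_one_nonsq:
  fixes x :: "'a::{finite,field}"
  assumes "card (UNIV :: 'a set) mod 4 = 3"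
  shows "x^2 \<noteq> -1"
proof
  assume h: "x^2 = -1"
  have two: "(2::'a) \<noteq> 0" using assms by (intro two_ne_zero_field) presburger
  have x0: "x \<noteq> 0" using h by auto
  have ar: "\<And>c::nat. c mod 4 = 3 \<Longrightarrow> c - 1 = 2*(2*(c div 4)+1)" by presburger
  obtain t where t: "card (UNIV :: 'a set) - 1 = 2 * (2*t+1)" using ar[OF assms] by blast
  have "x ^ (card (UNIV :: 'a set) - 1) = (x^2)^(2*t+1)" by (simp only: t power_mult)
  also have "\<dots> = -1" by (simp add: h)
  finally have "(1::'a) = -1" using fermat_field[OF x0] by simp
  then have "(1::'a) + 1 = 0" by (metis add.right_inverse)
  then have "(2::'a) = 0" by simp
  with two show False by simp
qed

definition subgrp :: "'a::ab_group_add set \<Rightarrow> bool" where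
  "subgrp H \<longleftrightarrow> 0 \<in> H \<and> (\<forall>a\<in>H. \<forall>b\<in>H. a + b \<in> H) \<and> (\<forall>a\<in>H. -a \<in> H)"

lemma subgrp_diff: "subgrp H \<Longrightarrow> a \<in> H \<Longrightarrow> b \<in> H \<Longrightarrow> a - b \<in> H"
  unfolding subgrp_def by (metis diff_conv_add_uminus)

lemma subgrp_nat_mult:
  fixes h :: "'a::{ring_1}"
  shows "subgrp H \<Longrightarrow> h \<in> H \<Longrightarrow> of_nat n * h \<in> H"
  by (induction n) (auto simp: subgrp_def distrib_right)

lemma subgrp_int_mult:
  fixes h :: "'a::{ring_1}"
  assumes "subgrp H" "h \<in> H"
  shows "of_int t * h \<in> H"
proof (cases "t \<ge> 0")
  case True
  then show ?thesis using subgrp_nat_mult[OF assms, of "nat t"] by simp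
next
  case False
  then have e: "of_int t * h = - (of_nat (nat (-t)) * h)" by simp
  have "of_nat (nat (-t)) * h \<in> H" using subgrp_nat_mult[OF assms] .
  then have "- (of_nat (nat (-t)) * h) \<in> H" using assms(1) unfolding subgrp_def by blast
  then show ?thesis unfolding e .
qed

lemma cis_cong_mod:
  assumes "int d dvd a - b" "d > 0"
  shows "cis (2 * pi * of_int a / d) = cis (2 * pi * of_int b / d)"
proof -
  from assms(1) obtain m where m: "a - b = int d * m" by (rule dvdE)
  then have "a = b + int d * m" by simp
  then have "real_of_int a = real_of_int b + real d * real_of_int m"
    by (metis of_int_add of_int_mult of_int_of_nat_eq)
  then have "2 * pi * of_int a / d = 2 * pi * of_int b / d + 2 * pi * of_int m"
    using assms(2) by (simp add: field_simps)
  then show ?thesis by (simp add: cis_mult[symmetric])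
qed

lemma exists_addchar:
  "\<exists>\<psi>::'a::{finite,field} \<Rightarrow> complex. (\<forall>x y. \<psi> (x + y) = \<psi> x * \<psi> y) \<and>
      (\<forall>x. cmod (\<psi> x) = 1) \<and> (\<exists>g. \<psi> g \<noteq> 1)"
proof -
  let ?P = "\<lambda>H::'a set. subgrp H \<and> H \<noteq> UNIV"
  have P0: "?P {0}" unfolding subgrp_def by (auto simp: set_eq_iff intro!: exI[of _ 1])
  have "\<forall>H. ?P H \<longrightarrow> card H < card (UNIV::'a set) + 1"
    by (simp add: card_mono less_Suc_eq_le del: UNIV_I)
  note Lattices_Big.ex_has_greatest_nat[of ?P, OF P0 this]
  have exH: "\<exists>H. ?P H \<and> (\<forall>K. ?P K \<longrightarrow> card K \<le> card H)" by fact
  define H where "H = (SOME H. ?P H \<and> (\<forall>K. ?P K \<longrightarrow> card K \<le> card H))"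
  have H0: "?P H" and Hmax0: "\<forall>K. ?P K \<longrightarrow> card K \<le> card H"
    using someI_ex[OF exH] unfolding H_def by blast+
  have H: "subgrp H" "H \<noteq> UNIV" using H0 by auto
  have Hmax: "\<And>K. ?P K \<Longrightarrow> card K \<le> card H" using Hmax0 by simp
  obtain g where g: "g \<notin> H" using H(2) by blast
  define K where "K = {of_int t * g + h | t h. h \<in> H}"
  have sK: "subgrp K"
    unfolding subgrp_def K_def
  proof (intro conjI ballI)
    show "0 \<in> {of_int t * g + h | t h. h \<in> H}"
      using H(1) unfolding subgrp_def by (intro CollectI exI[of _ 0]) auto
  next
    fix a b assume "a \<in> {of_int t * g + h | t h. h \<in> H}" "b \<in> {of_int t * g + h | t h. h \<in> H}"
    then obtain t h t' h' where "a = of_int t * g + h" "h \<in> H" "b = of_int t' * g + h'" "h' \<in> H" by blast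
    then show "a + b \<in> {of_int t * g + h | t h. h \<in> H}"
      using H(1) unfolding subgrp_def
      by (intro CollectI exI[of _ "t + t'"] exI[of _ "h + h'"]) (auto simp: algebra_simps)
  next
    fix a assume "a \<in> {of_int t * g + h | t h. h \<in> H}"
    then obtain t h where "a = of_int t * g + h" "h \<in> H" by blast
    then show "-a \<in> {of_int t * g + h | t h. h \<in> H}"
      using H(1) unfolding subgrp_def
      by (intro CollectI exI[of _ "- t"] exI[of _ "- h"]) (auto simp: algebra_simps)
  qed
  have "H \<subset> K"
  proof
    show "H \<subseteq> K"
    proof
      fix h assume "h \<in> H"
      then show "h \<in> K" unfolding K_def by (intro CollectI exI[of _ 0] exI[of _ h]) simp
    qed
    have "g \<in> K" unfolding K_def using H(1) unfolding subgrp_def by (intro CollectI exI[of _ 1] exI[of _ 0]) simp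
    then show "H \<noteq> K" using g by blast
  qed
  then have "card H < card K" by (simp add: psubset_card_mono)
  then have "\<not> (subgrp K \<and> K \<noteq> UNIV)" using Hmax[of K] by (meson not_le)
  then have KU: "K = UNIV" using sK by simp
  have "CHAR('a) > 0" by (rule finite_imp_CHAR_pos) simp
  have ex: "\<exists>d. d > 0 \<and> of_nat d * g \<in> H"
    using \<open>CHAR('a) > 0\<close> H(1) unfolding subgrp_def by (intro exI[of _ "CHAR('a)"]) simp
  define d where "d = (LEAST d. d > 0 \<and> of_nat d * g \<in> H)"
  have d: "d > 0" "of_nat d * g \<in> H" using LeastI_ex[OF ex] unfolding d_def by auto
  have dmin: "\<And>e. 0 < e \<Longrightarrow> e < d \<Longrightarrow> of_nat e * g \<notin> H"
    unfolding d_def using not_less_Least by blast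
  have key: "of_int t * g \<in> H \<longleftrightarrow> int d dvd t" for t
  proof
    assume "int d dvd t"
    then obtain m where "t = int d * m" by (auto elim: dvdE)
    then have e: "of_int t * g = of_int m * (of_nat d * g)" by (simp add: algebra_simps)
    show "of_int t * g \<in> H" unfolding e by (rule subgrp_int_mult[OF H(1) d(2)])
  next
    assume t: "of_int t * g \<in> H"
    define r where "r = t mod int d"
    have "t = r + int d * (t div int d)" unfolding r_def by simp
    then have "(of_int t::'a) = of_int (r + int d * (t div int d))" by simp
    also have "\<dots> = of_int r + of_nat d * of_int (t div int d)" by simp
    finally have e: "(of_int t::'a) = of_int r + of_nat d * of_int (t div int d)" .
    have "of_int r * g = of_int t * g - of_int (t div int d) * (of_nat d * g)"
      unfolding e by (simp add: algebra_simps)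
    then have rH: "of_int r * g \<in> H"
      using subgrp_diff[OF H(1) t subgrp_int_mult[OF H(1) d(2)]] by simp
    have r0: "r \<ge> 0" "r < int d" unfolding r_def using d(1) by auto
    have "r = 0"
    proof (rule ccontr)
      assume "r \<noteq> 0"
      then have "0 < nat r" "nat r < d" using r0 by auto
      moreover have "of_nat (nat r) * g \<in> H" using rH r0 by simp
      ultimately show False using dmin by blast
    qed
    then show "int d dvd t" unfolding r_def by auto
  qed
  have d1: "d > 1"
  proof (rule ccontr)
    assume "\<not> d > 1"
    then have "d = 1" using d(1) by simp
    then show False using d(2) g by simp
  qed
  have exf: "\<exists>t. x - of_int t * g \<in> H" for x
  proof -
    have "x \<in> K" using KU by simp
    then obtain t h where "x = of_int t * g + h" "h \<in> H" unfolding K_def by blast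
    then show ?thesis by (intro exI[of _ t]) simp
  qed
  define f where "f x = (SOME t. x - of_int t * g \<in> H)" for x
  have f: "x - of_int (f x) * g \<in> H" for x unfolding f_def using someI_ex[OF exf] .
  define \<psi> where "\<psi> x = cis (2 * pi * of_int (f x) / d)" for x
  have A1: "\<psi> (x + y) = \<psi> x * \<psi> y" for x y
  proof -
    have "(x - of_int (f x) * g) + (y - of_int (f y) * g) - ((x + y) - of_int (f (x+y)) * g) \<in> H"
      using f H(1) subgrp_diff unfolding subgrp_def by metis
    then have "of_int (f (x+y) - (f x + f y)) * g \<in> H" by (simp add: algebra_simps)
    then have "int d dvd f (x+y) - (f x + f y)" using key by blast
    then have "\<psi> (x+y) = cis (2 * pi * of_int (f x + f y) / d)"
      unfolding \<psi>_def using cis_cong_mod d(1) by blast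
    then show ?thesis unfolding \<psi>_def by (simp add: cis_mult add_divide_distrib distrib_left)
  qed
  have A2: "cmod (\<psi> x) = 1" for x unfolding \<psi>_def by simp
  have A3: "\<psi> g \<noteq> 1"
  proof
    assume "\<psi> g = 1"
    have "of_int (1 - f g) * g = g - of_int (f g) * g" by (simp add: algebra_simps)
    then have "of_int (1 - f g) * g \<in> H" using f[of g] by simp
    then have "int d dvd 1 - f g" using key by blast
    then have "cis (2 * pi * of_int 1 / d) = \<psi> g" unfolding \<psi>_def using cis_cong_mod d(1) by blast
    then have "cos (2 * pi / d) = 1" using \<open>\<psi> g = 1\<close> by (metis cis.sel(1) of_int_1 mult.right_neutral one_complex.sel(1))
    then obtain n :: int where n: "2 * pi / d = of_int n * 2 * pi" by (metis cos_one_2pi_int)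
    then have e: "real_of_int n * real d = 1" using d(1) by (simp add: field_simps)
    show False
    proof (cases "n \<le> 0")
      case True
      then have "real_of_int n * real d \<le> 0" by (simp add: mult_nonpos_nonneg)
      then show False using e by simp
    next
      case False
      then have "real_of_int n \<ge> 1" by simp
      then have "real_of_int n * real d \<ge> 1 * real d" by (intro mult_right_mono) auto
      then show False using e d1 by simp
    qed
  qed
  show ?thesis
    apply (rule exI[of _ \<psi>])
    using A1 A2 A3 by blast
qed

locale addchar =
  fixes \<psi> :: "'a::{finite,field} \<Rightarrow> complex"
  assumes hom: "\<psi> (x + y) = \<psi> x * \<psi> y"
    and unit: "cmod (\<psi> x) = 1"
    and nontriv: "\<exists>g. \<psi> g \<noteq> 1"
begin



lemma psi0: "\<psi> 0 = 1"
proof -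
  have "\<psi> 0 = \<psi> 0 * \<psi> 0" using hom[of 0 0] by simp
  moreover have "\<psi> 0 \<noteq> 0" using unit[of 0] by auto
  ultimately show ?thesis by (metis mult_cancel_left2)
qed

lemma psi_neg: "\<psi> (- x) = cnj (\<psi> x)"
proof -
  have "\<psi> (-x) * \<psi> x = 1" using hom[of "-x" x] psi0 by simp
  moreover have "cnj (\<psi> x) * \<psi> x = 1"
    using complex_norm_square[of "\<psi> x"] unit[of x] by (simp add: mult.commute)
  moreover have "\<psi> x \<noteq> 0" using unit[of x] by auto
  ultimately show ?thesis by (metis mult_cancel_right)
qed

lemma psi_diff: "\<psi> (x - y) = \<psi> x * cnj (\<psi> y)"
  using hom[of x "-y"] psi_neg[of y] by simp

lemma psi_sum: "finite A \<Longrightarrow> \<psi> (sum f A) = (\<Prod>i\<in>A. \<psi> (f i))"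
  by (induction A rule: finite_induct) (auto simp: psi0 hom)

lemma sum_psi: "(\<Sum>x\<in>UNIV. \<psi> x) = 0"
proof -
  obtain g where g: "\<psi> g \<noteq> 1" using nontriv by blast
  have "(\<Sum>x\<in>UNIV. \<psi> x) = (\<Sum>x\<in>UNIV. \<psi> (x + g))"
    by (rule sum.reindex_bij_witness[of _ "\<lambda>x. x + g" "\<lambda>x. x - g"]) auto
  also have "\<dots> = \<psi> g * (\<Sum>x\<in>UNIV. \<psi> x)" by (simp add: hom sum_distrib_left mult.commute)
  finally have "(\<psi> g - 1) * (\<Sum>x\<in>UNIV. \<psi> x) = 0" by (simp add: algebra_simps)
  then show ?thesis using g by simp
qed

lemma sum_psi_mult: "(\<Sum>x\<in>UNIV. \<psi> (a * x)) = (if a = 0 then of_nat (card (UNIV::'a set)) else 0)"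
proof (cases "a = 0")
  case True then show ?thesis by (simp add: psi0)
next
  case False
  have "(\<Sum>x\<in>UNIV. \<psi> (a * x)) = (\<Sum>x\<in>UNIV. \<psi> x)"
    by (rule sum.reindex_bij_witness[of _ "\<lambda>x. x / a" "\<lambda>x. a * x"]) (use False in auto)
  then show ?thesis using False sum_psi by simp
qed

lemma sum_psi_nonzero: "(\<Sum>x\<in>UNIV-{0}. \<psi> x) = -1"
proof -
  have "(\<Sum>x\<in>UNIV. \<psi> x) = \<psi> 0 + (\<Sum>x\<in>UNIV-{0}. \<psi> x)"
    by (metis finite UNIV_I sum.remove)
  then show ?thesis using sum_psi psi0 by (simp add: eq_neg_iff_add_eq_0 add.commute)
qed

lemma sum_psi_inv: "(\<Sum>s\<in>UNIV-{0}. \<psi> (c / s)) = (if c = 0 then of_nat (card (UNIV::'a set)) - 1 else -1)"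
proof (cases "c = 0")
  case True
  have "card (UNIV - {0::'a}) = card (UNIV::'a set) - 1" by (simp add: card_Diff_singleton)
  moreover have "card (UNIV::'a set) > 0" by (simp add: card_gt_0_iff)
  then have "card (UNIV::'a set) \<ge> 1" by simp
  ultimately show ?thesis using True by (simp add: psi0 of_nat_diff)
next
  case False
  have "(\<Sum>s\<in>UNIV-{0}. \<psi> (c / s)) = (\<Sum>x\<in>UNIV-{0}. \<psi> x)"
    by (rule sum.reindex_bij_witness[of _ "\<lambda>x. c / x" "\<lambda>s. c / s"]) (use False in auto)
  then show ?thesis using False sum_psi_nonzero by simp
qed

definition G :: "'a \<Rightarrow> complex" where "G a = (\<Sum>x\<in>UNIV. \<psi> (a * x^2))"

lemma G_cnj: "cnj (G a) = G (- a)"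
  unfolding G_def by (simp add: psi_neg[symmetric])

lemma G_norm:
  assumes two: "(2::'a) \<noteq> 0" and a: "a \<noteq> 0"
  shows "G a * cnj (G a) = of_nat (card (UNIV::'a set))"
proof -
  have four: "(4::'a) \<noteq> 0" using two by (metis mult_2 mult_eq_0_iff numeral_Bit0)
  have "G a * cnj (G a) = (\<Sum>x\<in>UNIV. \<Sum>y\<in>UNIV. \<psi> (a * x^2) * cnj (\<psi> (a * y^2)))"
    unfolding G_def by (simp add: sum_product)
  also have "\<dots> = (\<Sum>(x,y)\<in>UNIV \<times> UNIV. \<psi> (a * ((x - y) * (x + y))))"
    by (simp add: sum.cartesian_product psi_diff[symmetric] power2_eq_square algebra_simps)
  also have "\<dots> = (\<Sum>(u,v)\<in>UNIV \<times> UNIV. \<psi> (a * (u * v)))"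
    by (rule sum.reindex_bij_witness[of _ "\<lambda>(u,v). ((u+v)/2, (v-u)/2)" "\<lambda>(x,y). (x-y, x+y)"])
       (use two four in \<open>auto simp: field_simps\<close>)
  also have "\<dots> = (\<Sum>u\<in>UNIV. \<Sum>v\<in>UNIV. \<psi> ((a * u) * v))"
    by (simp add: sum.cartesian_product mult.assoc)
  also have "\<dots> = (\<Sum>u\<in>UNIV. if a * u = 0 then of_nat (card (UNIV::'a set)) else 0)"
    by (simp only: sum_psi_mult)
  also have "\<dots> = (\<Sum>u::'a\<in>UNIV. if u = 0 then of_nat (card (UNIV::'a set)) else 0)"
    using a by simp
  finally show ?thesis by simp
qed

definition N :: "'a \<Rightarrow> nat" where "N y = card {x. x^2 = y}"

lemma sum_sq_fibre: "(\<Sum>x\<in>UNIV. f (x^2)) = (\<Sum>y\<in>UNIV. of_nat (N y) * (f y :: complex))"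
proof -
  have "(\<Sum>x\<in>UNIV. f (x^2)) = (\<Sum>x\<in>UNIV. \<Sum>y\<in>UNIV. if x^2 = y then f y else 0)"
    by simp
  also have "\<dots> = (\<Sum>y\<in>UNIV. \<Sum>x\<in>UNIV. if x^2 = y then f y else 0)"
    by (rule sum.swap)
  also have "\<dots> = (\<Sum>y\<in>UNIV. of_nat (N y) * f y)"
    unfolding N_def by (simp add: sum.If_cases)
  finally show ?thesis .
qed

lemma N_le2: "N y \<le> 2"
proof (cases "\<exists>x0. x0^2 = y")
  case True
  then obtain x0 where x0: "x0^2 = y" by blast
  have "{x. x^2 = y} \<subseteq> {x0, -x0}"
  proof
    fix x assume "x \<in> {x. x^2 = y}"
    then have "(x - x0) * (x + x0) = 0" using x0 by (simp add: algebra_simps power2_eq_square)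
    then show "x \<in> {x0, -x0}" by (auto simp: eq_neg_iff_add_eq_0)
  qed
  then have "N y \<le> card {x0, -x0}" unfolding N_def by (simp add: card_mono)
  also have "\<dots> \<le> 2" by (simp add: card_insert_le_m1)
  finally show ?thesis .
next
  case False
  then show ?thesis unfolding N_def by simp
qed

lemma N_sum: "(\<Sum>y\<in>UNIV. N y) = card (UNIV::'a set)"
proof -
  have c: "N y = (\<Sum>x::'a\<in>UNIV. if x^2 = y then 1 else 0)" for y
    unfolding N_def using sum.inter_filter[of UNIV "\<lambda>_. 1::nat" "\<lambda>x. x^2 = y"] by simp
  have "(\<Sum>y\<in>UNIV. N y) = (\<Sum>y\<in>UNIV. \<Sum>x::'a\<in>UNIV. if x^2 = y then 1 else 0)"
    by (rule sum.cong[OF refl c])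
  also have "\<dots> = (\<Sum>x::'a\<in>UNIV. \<Sum>y\<in>UNIV. if x^2 = y then 1 else 0)"
    by (rule sum.swap)
  also have "\<dots> = card (UNIV::'a set)" by simp
  finally show ?thesis .
qed

lemma N0: "N 0 = 1"
  unfolding N_def by simp

lemma N_pair:
  assumes m1: "\<And>x::'a. x^2 \<noteq> -1"
  shows "N y + N (-y) = 2"
proof -
  have le: "N y + N (-y) \<le> 2" for y
  proof (cases "y = 0")
    case True then show ?thesis by (simp add: N0)
  next
    case False
    have "N y = 0 \<or> N (-y) = 0"
    proof (rule ccontr)
      assume "\<not> (N y = 0 \<or> N (-y) = 0)"
      then obtain x w where "x^2 = y" "w^2 = -y"
        unfolding N_def by (metis (mono_tags, lifting) card.empty empty_Collect_eq)
      then have "(w / x)^2 = -1" using False by (auto simp: power_divide)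
      then show False using m1 by blast
    qed
    then show ?thesis using N_le2[of y] N_le2[of "-y"] by auto
  qed
  have s: "(\<Sum>y\<in>UNIV. N y + N (-y)) = 2 * card (UNIV::'a set)"
  proof -
    have "(\<Sum>y\<in>UNIV. N (-y)) = (\<Sum>y\<in>UNIV. N y)"
      by (rule sum.reindex_bij_witness[of _ uminus uminus]) auto
    then show ?thesis by (simp add: sum.distrib N_sum)
  qed
  have "(\<Sum>y\<in>UNIV. (2::int) - int (N y + N (-y))) = (\<Sum>y::'a\<in>UNIV. (2::int)) - (\<Sum>y\<in>UNIV. int (N y + N (-y)))"
    by (simp add: sum_subtractf)
  also have "(\<Sum>y\<in>UNIV. int (N y + N (-y))) = int (2 * card (UNIV::'a set))"
    using s by (metis of_nat_sum)
  finally have "(\<Sum>y\<in>UNIV. (2::int) - int (N y + N (-y))) = 0" by simp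
  moreover have "\<forall>y::'a\<in>UNIV. (2::int) - int (N y + N (-y)) \<ge> 0"
  proof
    fix y :: 'a
    have "N y + N (-y) \<le> 2" by (rule le)
    then show "(2::int) - int (N y + N (-y)) \<ge> 0" by linarith
  qed
  ultimately have "\<forall>y::'a\<in>UNIV. (2::int) - int (N y + N (-y)) = 0"
    using sum_nonneg_eq_0_iff[of UNIV "\<lambda>y. (2::int) - int (N y + N (-y))"] by simp
  then have "int (N y) + int (N (-y)) = 2" by auto
  then show ?thesis by linarith
qed

lemma G_neg:
  assumes m1: "\<And>x::'a. x^2 \<noteq> -1" and a: "a \<noteq> 0"
  shows "G (- a) = - G a"
proof -
  have "G a = (\<Sum>y\<in>UNIV. of_nat (N y) * \<psi> (a * y))"
    unfolding G_def by (rule sum_sq_fibre)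
  moreover have "G (-a) = (\<Sum>y\<in>UNIV. of_nat (N (-y)) * \<psi> (a * y))"
  proof -
    have "G (-a) = (\<Sum>y\<in>UNIV. of_nat (N y) * \<psi> (-a * y))"
      unfolding G_def by (rule sum_sq_fibre)
    also have "\<dots> = (\<Sum>y\<in>UNIV. of_nat (N (-y)) * \<psi> (a * y))"
      by (rule sum.reindex_bij_witness[of _ uminus uminus]) auto
    finally show ?thesis .
  qed
  ultimately have "G a + G (-a) = (\<Sum>y\<in>UNIV. of_nat (N y + N (-y)) * \<psi> (a * y))"
    by (simp add: sum.distrib distrib_right)
  also have "\<dots> = (\<Sum>y\<in>UNIV. 2 * \<psi> (a * y))" using N_pair[OF m1] by simp
  also have "\<dots> = 0" using a by (simp add: sum_distrib_left[symmetric] sum_psi_mult)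
  finally show ?thesis by (simp add: eq_neg_iff_add_eq_0 add.commute)
qed

lemma G_sq:
  assumes two: "(2::'a) \<noteq> 0" and m1: "\<And>x::'a. x^2 \<noteq> -1" and a: "a \<noteq> 0"
  shows "(G a)^2 = - of_nat (card (UNIV::'a set))"
proof -
  have "G a * cnj (G a) = of_nat (card (UNIV::'a set))" by (rule G_norm[OF two a])
  then have "G a * G (-a) = of_nat (card (UNIV::'a set))" by (simp add: G_cnj)
  then have "- (G a * G a) = of_nat (card (UNIV::'a set))" using G_neg[OF m1 a] by simp
  then show ?thesis unfolding power2_eq_square by (metis minus_minus)
qed

lemma complete_square:
  assumes two: "(2::'a) \<noteq> 0" and a: "a \<noteq> 0"
  shows "(\<Sum>x\<in>UNIV. \<psi> (a * x^2 + b * x)) = \<psi> (- (b^2 / (4 * a))) * G a"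
proof -
  have four: "(4::'a) \<noteq> 0" using two by (metis mult_2 mult_eq_0_iff numeral_Bit0)
  define c where "c = b / (2*a)"
  have "(\<Sum>x\<in>UNIV. \<psi> (a * x^2 + b * x)) = (\<Sum>y\<in>UNIV. \<psi> (a * (y - c)^2 + b * (y - c)))"
    by (rule sum.reindex_bij_witness[of _ "\<lambda>y. y - c" "\<lambda>x. x + c"]) auto
  also have "\<dots> = (\<Sum>y\<in>UNIV. \<psi> (- (b^2 / (4 * a)) + a * y^2))"
  proof (rule sum.cong[OF refl])
    fix y
    have b: "b = 2*a*c" using two a by (simp add: c_def)
    have e1: "b^2/(4*a) = a*c^2" unfolding b using a four by (simp add: power2_eq_square field_simps)
    have "a * (y - c)^2 + b * (y - c) = - (a*c^2) + a * y^2"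
      unfolding b by (simp add: power2_eq_square algebra_simps)
    then have "a * (y - c)^2 + b * (y - c) = - (b^2 / (4 * a)) + a * y^2" using e1 by simp
    then show "\<psi> (a * (y - c)^2 + b * (y - c)) = \<psi> (- (b^2 / (4 * a)) + a * y^2)"
      by simp
  qed
  also have "\<dots> = \<psi> (- (b^2 / (4 * a))) * G a"
    unfolding G_def by (simp only: hom sum_distrib_left)
  finally show ?thesis .
qed

end

lemma fvec_Suc: "fvec (Suc k) = (\<lambda>(u, a). u(k := a)) ` (fvec k \<times> UNIV)"
proof (intro equalityI subsetI)
  fix x assume x: "x \<in> fvec (Suc k)"
  then have "x(k := 0) \<in> fvec k" unfolding fvec_def by auto
  moreover have "x = (x(k := 0))(k := x k)" by simp
  ultimately show "x \<in> (\<lambda>(u, a). u(k := a)) ` (fvec k \<times> UNIV)"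
    by (intro image_eqI[of _ _ "(x(k:=0), x k)"]) auto
next
  fix x assume "x \<in> (\<lambda>(u, a). u(k := a)) ` (fvec k \<times> UNIV)"
  then show "x \<in> fvec (Suc k)" unfolding fvec_def by auto
qed

lemma fvec_inj: "inj_on (\<lambda>(u, a). u(k := a)) (fvec k \<times> UNIV)"
proof (rule inj_onI, clarsimp)
  fix u a v b
  assume "u \<in> fvec k" "v \<in> fvec k" "u(k := a) = v(k := b)"
  moreover from this have "u k = 0" "v k = 0" unfolding fvec_def by auto
  ultimately show "u = v \<and> a = b" by (metis fun_upd_idem fun_upd_upd fun_upd_same)
qed

lemma finite_fvec: "finite (fvec k :: (nat \<Rightarrow> 'a::{finite,zero}) set)"
proof (induction k)
  case 0
  have "fvec 0 = {(\<lambda>_. 0) :: nat \<Rightarrow> 'a}" unfolding fvec_def by auto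
  then show ?case by simp
next
  case (Suc k)
  then show ?case by (simp add: fvec_Suc)
qed

lemma sum_fvec_prod:
  fixes f :: "nat \<Rightarrow> 'a::{finite,zero} \<Rightarrow> 'b::comm_semiring_1"
  shows "(\<Sum>u\<in>fvec k. \<Prod>i<k. f i (u i)) = (\<Prod>i<k. \<Sum>x\<in>UNIV. f i x)"
proof (induction k)
  case 0
  have "fvec 0 = {(\<lambda>_. 0) :: nat \<Rightarrow> 'a}" unfolding fvec_def by auto
  then show ?case by simp
next
  case (Suc k)
  have "(\<Sum>u\<in>fvec (Suc k). \<Prod>i<Suc k. f i (u i))
      = (\<Sum>(u, a)\<in>fvec k \<times> UNIV. \<Prod>i<Suc k. f i ((u(k := a)) i))"
    unfolding fvec_Suc by (subst sum.reindex[OF fvec_inj]) (simp add: case_prod_beta')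
  also have "\<dots> = (\<Sum>(u, a)\<in>fvec k \<times> UNIV. (\<Prod>i<k. f i (u i)) * f k a)"
    by (rule sum.cong[OF refl]) (auto simp: lessThan_Suc mult.commute intro!: prod.cong)
  also have "\<dots> = (\<Sum>u\<in>fvec k. \<Prod>i<k. f i (u i)) * (\<Sum>a\<in>UNIV. f k a)"
    by (simp add: sum_product sum.cartesian_product)
  finally show ?case using Suc by simp
qed

lemma card_fvec: "card (fvec k :: (nat \<Rightarrow> 'a::{finite,zero}) set) = card (UNIV::'a set) ^ k"
  using sum_fvec_prod[of "\<lambda>_ (_::'a). (1::nat)" k] by simp

definition dot :: "nat \<Rightarrow> (nat \<Rightarrow> 'a::comm_ring_1) \<Rightarrow> (nat \<Rightarrow> 'a) \<Rightarrow> 'a" where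
  "dot k m z = (\<Sum>i<k. m i * z i)"

definition cf :: "nat \<Rightarrow> 'a::comm_ring_1" where "cf i = (if i = 0 then -1 else 1)"

lemma lessThan_insert0: "0 < (k::nat) \<Longrightarrow> {..<k} = insert 0 {1..<k}"
  by (auto simp: not_le)

lemma Qform_expand: "0 < k \<Longrightarrow> Qform k m = (\<Sum>i<k. cf i * (m i)^2)"
proof -
  assume k: "0 < k"
  have "(\<Sum>i<k. cf i * (m i)^2) = cf 0 * (m 0)^2 + (\<Sum>i\<in>{1..<k}. cf i * (m i)^2)"
    unfolding lessThan_insert0[OF k] by (subst sum.insert) auto
  also have "(\<Sum>i\<in>{1..<k}. cf i * (m i)^2) = (\<Sum>i\<in>{1..<k}. (m i)^2)"
    by (rule sum.cong) (auto simp: cf_def)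
  finally show ?thesis unfolding Qform_def by (simp add: cf_def)
qed

lemma fvec_zero_iff: "z \<in> fvec k \<Longrightarrow> z = (\<lambda>_. 0) \<longleftrightarrow> (\<forall>i<k. z i = 0)"
  unfolding fvec_def by (auto simp: fun_eq_iff) (meson not_le)

context addchar
begin

lemma sum_psi_dot:
  assumes z: "z \<in> fvec k"
  shows "(\<Sum>m\<in>fvec k. \<psi> (dot k m z)) = (if z = (\<lambda>_. 0) then of_nat (card (UNIV::'a set)) ^ k else 0)"
proof -
  have "(\<Sum>m\<in>fvec k. \<psi> (dot k m z)) = (\<Sum>m\<in>fvec k. \<Prod>i<k. \<psi> (m i * z i))"
    unfolding dot_def by (simp add: psi_sum)
  also have "\<dots> = (\<Prod>i<k. \<Sum>x\<in>UNIV. \<psi> (x * z i))"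
    by (rule sum_fvec_prod)
  also have "\<dots> = (\<Prod>i<k. if z i = 0 then of_nat (card (UNIV::'a set)) else 0)"
  proof (rule prod.cong[OF refl])
    fix i
    show "(\<Sum>x\<in>UNIV. \<psi> (x * z i)) = (if z i = 0 then of_nat (card (UNIV::'a set)) else 0)"
      using sum_psi_mult[of "z i"] by (simp add: mult.commute)
  qed
  also have "\<dots> = (if z = (\<lambda>_. 0) then of_nat (card (UNIV::'a set)) ^ k else 0)"
  proof (cases "z = (\<lambda>_. 0)")
    case True
    then show ?thesis by simp
  next
    case False
    then obtain i where "i < k" "z i \<noteq> 0" using fvec_zero_iff[OF z] by blast
    then have "(\<Prod>i<k. if z i = 0 then of_nat (card (UNIV::'a set)) else 0) = (0::complex)"
      by (intro prod_zero) auto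
    then show ?thesis using False by simp
  qed
  finally show ?thesis .
qed

lemma cf_sq: "(cf i :: 'a) * cf i = 1" by (simp add: cf_def)
lemma cf_nz: "(cf i :: 'a) \<noteq> 0" by (simp add: cf_def)

lemma key_s:
  assumes two: "(2::'a) \<noteq> 0" and m1: "\<And>x::'a. x^2 \<noteq> -1"
    and k: "0 < k" "k mod 4 = 0" and s: "s \<noteq> 0"
  shows "(\<Sum>m\<in>fvec k. \<psi> (s * Qform k m + dot k m z))
         = - (of_nat (card (UNIV::'a set)) ^ (k div 2)) * \<psi> (- (Qform k z / (4 * s)))"
proof -
  have four: "(4::'a) \<noteq> 0" using two by (metis mult_2 mult_eq_0_iff numeral_Bit0)
  have "(\<Sum>m\<in>fvec k. \<psi> (s * Qform k m + dot k m z))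
      = (\<Sum>m\<in>fvec k. \<Prod>i<k. \<psi> ((s * cf i) * (m i)^2 + z i * m i))"
  proof (rule sum.cong[OF refl])
    fix m
    have "s * Qform k m + dot k m z = (\<Sum>i<k. (s * cf i) * (m i)^2 + z i * m i)"
      unfolding Qform_expand[OF k(1)] dot_def
      by (simp add: sum.distrib sum_distrib_left mult.assoc mult.commute)
    then show "\<psi> (s * Qform k m + dot k m z) = (\<Prod>i<k. \<psi> ((s * cf i) * (m i)^2 + z i * m i))"
      by (simp add: psi_sum)
  qed
  also have "\<dots> = (\<Prod>i<k. \<Sum>x\<in>UNIV. \<psi> ((s * cf i) * x^2 + z i * x))"
    by (rule sum_fvec_prod)
  also have "\<dots> = (\<Prod>i<k. \<psi> (- ((z i)^2 / (4 * (s * cf i)))) * G (s * cf i))"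
    using complete_square[OF two] s cf_nz by simp
  also have "\<dots> = (\<Prod>i<k. \<psi> (- ((z i)^2 / (4 * (s * cf i))))) * (\<Prod>i<k. G (s * cf i))"
    by (rule prod.distrib)
  also have "(\<Prod>i<k. \<psi> (- ((z i)^2 / (4 * (s * cf i))))) = \<psi> (- (Qform k z / (4 * s)))"
  proof -
    have "(\<Sum>i<k. - ((z i)^2 / (4 * (s * cf i)))) = - (Qform k z / (4 * s))"
    proof -
      have "(\<Sum>i<k. - ((z i)^2 / (4 * (s * cf i)))) = (\<Sum>i<k. - ((cf i * (z i)^2) / (4 * s)))"
        by (rule sum.cong) (auto simp: cf_def)
      also have "\<dots> = - ((\<Sum>i<k. cf i * (z i)^2) / (4 * s))"
        by (simp add: sum_negf sum_divide_distrib)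
      finally show ?thesis unfolding Qform_expand[OF k(1)] .
    qed
    then show ?thesis by (simp add: psi_sum[symmetric])
  qed
  also have "(\<Prod>i<k. G (s * cf i)) = - (of_nat (card (UNIV::'a set)) ^ (k div 2))"
  proof -
    have "(\<Prod>i<k. G (s * cf i)) = G (s * cf 0) * (\<Prod>i\<in>{1..<k}. G (s * cf i))"
      unfolding lessThan_insert0[OF k(1)] by (subst prod.insert) auto
    also have "(\<Prod>i\<in>{1..<k}. G (s * cf i)) = (\<Prod>i\<in>{1..<k}. G s)"
      by (rule prod.cong) (auto simp: cf_def)
    also have "\<dots> = G s ^ (k - 1)" by simp
    also have "G (s * cf 0) = - G s" using G_neg[OF m1 s] by (simp add: cf_def)
    finally have "(\<Prod>i<k. G (s * cf i)) = - (G s ^ Suc (k - 1))" by simp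
    also have "Suc (k - 1) = 2 * (k div 2)" using k by presburger
    also have "G s ^ (2 * (k div 2)) = (- of_nat (card (UNIV::'a set))) ^ (k div 2)"
      by (simp add: power_mult G_sq[OF two m1 s])
    also have "\<dots> = of_nat (card (UNIV::'a set)) ^ (k div 2)"
    proof -
      have "even (k div 2)" using k by presburger
      then show ?thesis by simp
    qed
    finally show ?thesis .
  qed
  finally show ?thesis by (simp add: mult.commute)
qed

end

context addchar
begin

lemma L_cone:
  assumes two: "(2::'a) \<noteq> 0" and m1: "\<And>x::'a. x^2 \<noteq> -1"
    and k: "0 < k" "k mod 4 = 0" and z: "z \<in> fvec k"
  shows "(\<Sum>m\<in>fvec k. if Qform k m = 0 then \<psi> (dot k m z) else 0)
    = (if z = (\<lambda>_. 0) then of_nat (card (UNIV::'a set)) ^ (k - 1) else 0)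
      - of_nat (card (UNIV::'a set)) ^ (k div 2 - 1)
        * ((if Qform k z = 0 then of_nat (card (UNIV::'a set)) else 0) - 1)"
proof -
  define Qc :: complex where "Qc = of_nat (card (UNIV::'a set))"
  have Qc0: "Qc \<noteq> 0" unfolding Qc_def by simp
  have four: "(4::'a) \<noteq> 0" using two by (metis mult_2 mult_eq_0_iff numeral_Bit0)
  have ind: "(if c = 0 then 1 else 0) = (1/Qc) * (\<Sum>s\<in>UNIV. \<psi> (s * c))" for c :: 'a
    using sum_psi_mult[of c] Qc0 unfolding Qc_def by (simp add: mult.commute)
  define F where "F s = (\<Sum>m\<in>fvec k. \<psi> (s * Qform k m + dot k m z))" for s
  have "(\<Sum>m\<in>fvec k. if Qform k m = 0 then \<psi> (dot k m z) else 0)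
      = (\<Sum>m\<in>fvec k. (1/Qc) * (\<Sum>s\<in>UNIV. \<psi> (s * Qform k m)) * \<psi> (dot k m z))"
  proof (rule sum.cong[OF refl])
    fix m
    show "(if Qform k m = 0 then \<psi> (dot k m z) else 0)
        = (1/Qc) * (\<Sum>s\<in>UNIV. \<psi> (s * Qform k m)) * \<psi> (dot k m z)"
      using ind[of "Qform k m"] by (metis (no_types, lifting) mult_1 mult_zero_left)
  qed
  also have "\<dots> = (1/Qc) * (\<Sum>m\<in>fvec k. \<Sum>s\<in>UNIV. \<psi> (s * Qform k m + dot k m z))"
    by (simp add: sum_distrib_left sum_distrib_right hom mult.assoc)
  also have "(\<Sum>m\<in>fvec k. \<Sum>s\<in>UNIV. \<psi> (s * Qform k m + dot k m z)) = (\<Sum>s\<in>UNIV. F s)"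
    unfolding F_def by (rule sum.swap)
  also have "\<dots> = F 0 + (\<Sum>s\<in>UNIV-{0}. F s)"
    by (metis finite UNIV_I sum.remove)
  also have "F 0 = (if z = (\<lambda>_. 0) then Qc ^ k else 0)"
    unfolding F_def Qc_def using sum_psi_dot[OF z] by simp
  also have "(\<Sum>s\<in>UNIV-{0}. F s) = (\<Sum>s\<in>UNIV-{0}. - (Qc ^ (k div 2)) * \<psi> ((- Qform k z / 4) / s))"
  proof (rule sum.cong[OF refl])
    fix s :: 'a assume "s \<in> UNIV - {0}"
    then have s: "s \<noteq> 0" by simp
    have "- (Qform k z / (4 * s)) = (- Qform k z / 4) / s" by (simp add: field_simps)
    then show "F s = - (Qc ^ (k div 2)) * \<psi> ((- Qform k z / 4) / s)"
      unfolding F_def Qc_def using key_s[OF two m1 k s, of z] by simp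
  qed
  also have "\<dots> = - (Qc ^ (k div 2)) * (if - Qform k z / 4 = 0 then Qc - 1 else -1)"
    unfolding sum_distrib_left[symmetric] sum_psi_inv[of "- Qform k z / 4"] Qc_def ..
  also have "(- Qform k z / 4 = 0) \<longleftrightarrow> Qform k z = 0" using four by simp
  finally have eq: "(\<Sum>m\<in>fvec k. if Qform k m = 0 then \<psi> (dot k m z) else 0)
     = 1 / Qc * ((if z = (\<lambda>_. 0) then Qc ^ k else 0) +
        - (Qc ^ (k div 2)) * (if Qform k z = 0 then Qc - 1 else -1))" .
  have "Qc ^ k = Qc ^ Suc (k - 1)" using k by simp
  then have p1: "Qc ^ k = Qc * Qc ^ (k - 1)" by (simp only: power_Suc)
  have "k div 2 = Suc (k div 2 - 1)" using k by presburger
  then have "Qc ^ (k div 2) = Qc ^ Suc (k div 2 - 1)" by (rule arg_cong)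
  then have p2: "Qc ^ (k div 2) = Qc * Qc ^ (k div 2 - 1)" by (simp only: power_Suc)
  have "1 / Qc * ((if z = (\<lambda>_. 0) then Qc * Qc ^ (k - 1) else 0) +
        - (Qc * Qc ^ (k div 2 - 1)) * (if Qform k z = 0 then Qc - 1 else -1))
     = (if z = (\<lambda>_. 0) then Qc ^ (k - 1) else 0)
      - Qc ^ (k div 2 - 1) * ((if Qform k z = 0 then Qc else 0) - 1)"
    using Qc0 by (cases "z = (\<lambda>_. 0)"; cases "Qform k z = 0") (simp_all add: field_simps)
  then have fin: "1 / Qc * ((if z = (\<lambda>_. 0) then Qc ^ k else 0) +
        - (Qc ^ (k div 2)) * (if Qform k z = 0 then Qc - 1 else -1))
     = (if z = (\<lambda>_. 0) then Qc ^ (k - 1) else 0)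
      - Qc ^ (k div 2 - 1) * ((if Qform k z = 0 then Qc else 0) - 1)"
    unfolding p1 p2 .
  show ?thesis using trans[OF eq fin] unfolding Qc_def .
qed

end

lemma dot_diff: "dot k m (\<lambda>i. x i - y i) = dot k m x - dot k m y"
  unfolding dot_def by (simp add: right_diff_distrib sum_subtractf)

lemma dot_zero: "dot k (\<lambda>_. 0) x = 0"
  unfolding dot_def by simp

lemma fvec_diff: "(x :: nat \<Rightarrow> 'a::ab_group_add) \<in> fvec k \<Longrightarrow> y \<in> fvec k \<Longrightarrow> (\<lambda>i. x i - y i) \<in> fvec k"
  unfolding fvec_def by auto

lemma zero_fvec: "(\<lambda>_. 0) \<in> fvec k"
  unfolding fvec_def by auto

lemma edges_sum:
  assumes W: "W \<subseteq> fvec k" and fin: "finite W"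
  shows "edges_in k W = (\<Sum>x\<in>W. \<Sum>y\<in>W. if Qform k (\<lambda>i. x i - y i) = 0 then 1 else 0)"
proof -
  have "{(x, y). x \<in> W \<and> y \<in> W \<and> (\<lambda>i. x i - y i) \<in> cone k}
      = {p \<in> W \<times> W. Qform k (\<lambda>i. fst p i - snd p i) = 0}"
    using W fvec_diff unfolding cone_def by fastforce
  then have "edges_in k W = card {p \<in> W \<times> W. Qform k (\<lambda>i. fst p i - snd p i) = 0}"
    unfolding edges_in_def by simp
  also have "\<dots> = (\<Sum>p\<in>W \<times> W. if Qform k (\<lambda>i. fst p i - snd p i) = 0 then 1 else 0)"
    using sum.inter_filter[of "W \<times> W" "\<lambda>_. 1::nat"] fin by simp
  also have "\<dots> = (\<Sum>(x,y)\<in>W \<times> W. if Qform k (\<lambda>i. x i - y i) = 0 then 1 else 0)"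
    by (rule sum.cong) auto
  also have "\<dots> = (\<Sum>x\<in>W. \<Sum>y\<in>W. if Qform k (\<lambda>i. x i - y i) = 0 then 1 else 0)"
    by (simp add: sum.cartesian_product)
  finally show ?thesis .
qed

context addchar
begin

lemma main_bound:
  fixes W :: "(nat \<Rightarrow> 'a) set"
  assumes two: "(2::'a) \<noteq> 0" and m1: "\<And>x::'a. x^2 \<noteq> -1"
    and k: "0 < k" "k mod 4 = 0" and W: "W \<subseteq> fvec k"
  shows "real (edges_in k W) \<le> real (card W)^2 / real (card (UNIV :: 'a set))
           + real (card (UNIV :: 'a set)) ^ ((k - 2) div 2) * real (card W)"
proof -
  let ?V = "fvec k :: (nat \<Rightarrow> 'a) set"
  have finV: "finite ?V" by (rule finite_fvec)
  have finW: "finite W" by (rule finite_subset[OF W finV])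
  define n where "n = k div 2"
  define q :: real where "q = real (card (UNIV :: 'a set))"
  define Qc :: complex where "Qc = of_nat (card (UNIV :: 'a set))"
  have Qcq: "Qc = of_real q" unfolding Qc_def q_def by simp
  have "card (UNIV::'a set) > 0" by (simp add: card_gt_0_iff)
  then have q1: "q \<ge> 1" unfolding q_def by simp
  define a where "a = q ^ (n - 1)"
  have a0: "a \<ge> 0" unfolding a_def using q1 by simp
  have kn: "k - 1 = (n - 1) + (n - 1) + 1" "k = (n - 1) + (n - 1) + 1 + 1" "(k - 2) div 2 = n - 1"
    unfolding n_def using k by presburger+
  define R where "R m = (if m = (\<lambda>_. 0) then q ^ (k - 1) else 0)
      - a * ((if Qform k m = 0 then q else 0) - 1)" for m :: "nat \<Rightarrow> 'a"
  define Wh where "Wh m = (\<Sum>x\<in>W. \<psi> (dot k m x))" for m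
  \<comment> \<open>Fourier expansion of the cone indicator\<close>
  have fourier: "of_real (q ^ k) * (if Qform k z = 0 then 1 else 0)
        = (\<Sum>m\<in>?V. of_real (R m) * \<psi> (dot k m z))" if z: "z \<in> ?V" for z
  proof -
    define L where "L = (\<Sum>m\<in>?V. if Qform k m = 0 then \<psi> (dot k m z) else 0)"
    define S where "S = (\<Sum>m\<in>?V. \<psi> (dot k m z))"
    have L: "L = (if z = (\<lambda>_. 0) then Qc ^ (k - 1) else 0)
      - Qc ^ (n - 1) * ((if Qform k z = 0 then Qc else 0) - 1)"
      unfolding L_def Qc_def n_def by (rule L_cone[OF two m1 k z])
    have S: "S = (if z = (\<lambda>_. 0) then Qc ^ k else 0)"
      unfolding S_def Qc_def by (rule sum_psi_dot[OF z])
    have trm: "of_real (R m) * \<psi> (dot k m z)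
        = (if m = (\<lambda>_. 0) then of_real (q ^ (k - 1)) * \<psi> (dot k m z) else 0)
          - of_real a * Qc * (if Qform k m = 0 then \<psi> (dot k m z) else 0)
          + of_real a * \<psi> (dot k m z)" for m
      unfolding R_def Qcq by (auto simp: algebra_simps)
    have "(\<Sum>m\<in>?V. of_real (R m) * \<psi> (dot k m z))
        = of_real (q ^ (k - 1)) - of_real a * Qc * L + of_real a * S"
      unfolding trm L_def S_def
      by (simp add: sum.distrib sum_subtractf sum_distrib_left finV zero_fvec dot_zero psi0)
    also have "\<dots> = of_real (q ^ k) * (if Qform k z = 0 then 1 else 0)"
    proof -
      have e1: "Qc ^ (k - 1) = of_real a * of_real a * Qc"
        unfolding kn(1) a_def Qcq by (simp add: power_add)
      have e2: "Qc ^ k = of_real a * of_real a * Qc * Qc"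
        unfolding a_def Qcq by (subst kn(2)) (simp add: power_add)
      have e3: "Qc ^ (n - 1) = of_real a" unfolding a_def Qcq by simp
      have "of_real (q ^ (k - 1)) = Qc ^ (k - 1)" "of_real (q ^ k) = Qc ^ k" unfolding Qcq by simp_all
      then show ?thesis unfolding L S e1 e2 e3
        by (cases "z = (\<lambda>_. 0)"; cases "Qform k z = 0") (simp_all add: algebra_simps)
    qed
    finally show ?thesis by simp
  qed
  have prod_form: "(\<Sum>x\<in>W. \<Sum>y\<in>W. \<psi> (dot k m (\<lambda>i. x i - y i))) = of_real ((cmod (Wh m))^2)" for m
  proof -
    have "of_real ((cmod (Wh m))^2) = Wh m * cnj (Wh m)" by (rule complex_norm_square)
    also have "\<dots> = (\<Sum>x\<in>W. \<Sum>y\<in>W. \<psi> (dot k m x) * cnj (\<psi> (dot k m y)))"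
      unfolding Wh_def by (simp add: sum_product cnj_sum)
    also have "\<dots> = (\<Sum>x\<in>W. \<Sum>y\<in>W. \<psi> (dot k m (\<lambda>i. x i - y i)))"
      by (simp add: dot_diff psi_diff)
    finally show ?thesis by simp
  qed
  have "of_real (q ^ k * real (edges_in k W))
      = (\<Sum>x\<in>W. \<Sum>y\<in>W. of_real (q ^ k) * (if Qform k (\<lambda>i. x i - y i) = 0 then 1 else 0))"
    unfolding edges_sum[OF W finW] by (simp add: sum_distrib_left if_distrib[of of_nat]; intro sum.cong refl; simp)
  also have "\<dots> = (\<Sum>x\<in>W. \<Sum>y\<in>W. \<Sum>m\<in>?V. of_real (R m) * \<psi> (dot k m (\<lambda>i. x i - y i)))"
  proof (rule sum.cong[OF refl], rule sum.cong[OF refl])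
    fix x y assume "x \<in> W" "y \<in> W"
    then have "(\<lambda>i. x i - y i) \<in> ?V" using W fvec_diff by blast
    then show "of_real (q ^ k) * (if Qform k (\<lambda>i. x i - y i) = 0 then 1 else 0)
       = (\<Sum>m\<in>?V. of_real (R m) * \<psi> (dot k m (\<lambda>i. x i - y i)))" by (rule fourier)
  qed
  also have "\<dots> = (\<Sum>x\<in>W. \<Sum>m\<in>?V. \<Sum>y\<in>W. of_real (R m) * \<psi> (dot k m (\<lambda>i. x i - y i)))"
    by (rule sum.cong[OF refl], rule sum.swap)
  also have "\<dots> = (\<Sum>m\<in>?V. \<Sum>x\<in>W. \<Sum>y\<in>W. of_real (R m) * \<psi> (dot k m (\<lambda>i. x i - y i)))"
    by (rule sum.swap)
  also have "\<dots> = (\<Sum>m\<in>?V. of_real (R m) * (\<Sum>x\<in>W. \<Sum>y\<in>W. \<psi> (dot k m (\<lambda>i. x i - y i))))"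
    by (simp add: sum_distrib_left)
  also have "\<dots> = of_real (\<Sum>m\<in>?V. R m * (cmod (Wh m))^2)"
    by (simp add: prod_form)
  finally have E: "q ^ k * real (edges_in k W) = (\<Sum>m\<in>?V. R m * (cmod (Wh m))^2)"
    using of_real_eq_iff by blast
  \<comment> \<open>Parseval\<close>
  have "of_real (q ^ k * real (card W)) = (\<Sum>x\<in>W. \<Sum>y\<in>W. if x = y then Qc ^ k else 0)"
    unfolding Qcq using finW by simp
  also have "\<dots> = (\<Sum>x\<in>W. \<Sum>y\<in>W. \<Sum>m\<in>?V. \<psi> (dot k m (\<lambda>i. x i - y i)))"
  proof (intro sum.cong refl)
    fix x y assume xy: "x \<in> W" "y \<in> W"
    have "(\<lambda>i. x i - y i) = (\<lambda>_. 0) \<longleftrightarrow> x = y" by (auto simp: fun_eq_iff)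
    then show "(if x = y then Qc ^ k else 0) = (\<Sum>m\<in>?V. \<psi> (dot k m (\<lambda>i. x i - y i)))"
    proof -
      have xV: "x \<in> fvec k" and yV: "y \<in> fvec k" using xy W by auto
      show ?thesis using sum_psi_dot[OF fvec_diff[OF xV yV]] \<open>_ \<longleftrightarrow> x = y\<close> unfolding Qc_def by auto
    qed
  qed
  also have "\<dots> = (\<Sum>x\<in>W. \<Sum>m\<in>?V. \<Sum>y\<in>W. \<psi> (dot k m (\<lambda>i. x i - y i)))"
    by (rule sum.cong[OF refl], rule sum.swap)
  also have "\<dots> = (\<Sum>m\<in>?V. (\<Sum>x\<in>W. \<Sum>y\<in>W. \<psi> (dot k m (\<lambda>i. x i - y i))))"
    by (rule sum.swap)
  also have "\<dots> = of_real (\<Sum>m\<in>?V. (cmod (Wh m))^2)"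
    by (simp add: prod_form)
  finally have P: "q ^ k * real (card W) = (\<Sum>m\<in>?V. (cmod (Wh m))^2)"
    using of_real_eq_iff by blast
  have Wh0: "(cmod (Wh (\<lambda>_. 0)))^2 = real (card W) ^ 2"
    unfolding Wh_def by (simp add: dot_zero psi0)
  have R0: "R (\<lambda>_. 0) = q ^ (k - 1) - a * (q - 1)"
    unfolding R_def by (simp add: Qform_def)
  have Rle: "R m \<le> a" if "m \<noteq> (\<lambda>_. 0)" for m
  proof -
    have "(if Qform k m = 0 then q else 0) - 1 \<ge> -1" using q1 by simp
    then have "a * ((if Qform k m = 0 then q else 0) - 1) \<ge> a * (-1)"
      using a0 by (intro mult_left_mono) auto
    then show ?thesis unfolding R_def using that by simp
  qed
  have split: "(\<Sum>m\<in>?V. f m) = f (\<lambda>_. 0) + (\<Sum>m\<in>?V - {\<lambda>_. 0}. f m)" for f :: "_ \<Rightarrow> real"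
    by (rule sum.remove[OF finV zero_fvec])
  have "(\<Sum>m\<in>?V - {\<lambda>_. 0}. R m * (cmod (Wh m))^2) \<le> (\<Sum>m\<in>?V - {\<lambda>_. 0}. a * (cmod (Wh m))^2)"
    by (intro sum_mono mult_right_mono Rle) auto
  then have "q ^ k * real (edges_in k W)
      \<le> R (\<lambda>_. 0) * real (card W) ^ 2 + a * (q ^ k * real (card W) - real (card W) ^ 2)"
    unfolding E P split[of "\<lambda>m. R m * (cmod (Wh m))^2"] split[of "\<lambda>m. (cmod (Wh m))^2"] Wh0
    by (simp add: sum_distrib_left algebra_simps)
  also have "\<dots> = (q ^ (k - 1) - a * q) * real (card W) ^ 2 + a * q ^ k * real (card W)"
    unfolding R0 by (simp add: algebra_simps)
  also have "\<dots> \<le> q ^ (k - 1) * real (card W) ^ 2 + a * q ^ k * real (card W)"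
  proof -
    have "0 \<le> a * q * real (card W) ^ 2" using a0 q1 by simp
    then show ?thesis by (simp add: algebra_simps)
  qed
  also have "\<dots> = q ^ k * (real (card W) ^ 2 / q + a * real (card W))"
  proof -
    have "q ^ k = q ^ Suc (k - 1)" using k by simp
    then have "q ^ k = q * q ^ (k - 1)" by (simp only: power_Suc)
    then show ?thesis using q1 by (simp add: field_simps)
  qed
  finally have "real (edges_in k W) \<le> real (card W) ^ 2 / q + a * real (card W)"
    using q1 by (simp add: mult_le_cancel_left_pos)
  then show ?thesis unfolding a_def q_def kn(3) .
qed

end

theorem lemma5p1:
  fixes W :: "(nat \<Rightarrow> 'a::{finite, field}) set" and k :: nat
  assumes "card (UNIV :: 'a set) mod 4 = 3"
    and "k > 0" and "k mod 4 = 0"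
    and "W \<subseteq> fvec k"
  shows "real (edges_in k W) \<le> real (card W)^2 / real (card (UNIV :: 'a set))
           + real (card (UNIV :: 'a set)) ^ ((k - 2) div 2) * real (card W)"
proof -
  obtain \<psi> :: "'a \<Rightarrow> complex" where h1: "\<forall>x y. \<psi> (x + y) = \<psi> x * \<psi> y"
    and h2: "\<forall>x. cmod (\<psi> x) = 1" and h3: "\<exists>g. \<psi> g \<noteq> 1"
    using exists_addchar by blast
  interpret addchar \<psi>
    by unfold_locales (use h1 h2 h3 in auto)
  have "odd (card (UNIV :: 'a set))" using assms(1) by presburger
  then have two: "(2::'a) \<noteq> 0" by (rule two_ne_zero_field)
  have m1: "\<And>x::'a. x^2 \<noteq> -1" using minus_one_nonsq[OF assms(1)] .
  show ?thesis by (rule main_bound[OF two m1 assms(2,3,4)])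
qed

end
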